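(* Let $\mathbb{A}_1\subseteq\cdots\subseteq\mathbb{A}_k$ be a flag of linear subspaces of $\mathbb{R}^n$ and $b\in\mathbb{R}^n$. Then $s_b\bigl(\Omega(\mathbb{A}_1,\dots,\mathbb{A}_k)\bigr)=\{\mathbb{B}+b:\mathbb{B}\in\Omega(\mathbb{A}_1,\dots,\mathbb{A}_k)\}$ is a strong deformation retract of $\Psi(\mathbb{A}_1+b,\dots,\mathbb{A}_k+b)$. In particular, $\Psi(\mathbb{A}_1+b,\dots,\mathbb{A}_k+b)$ is homotopy equivalent to $\tau^{-1}\bigl(\Omega(\mathbb{A}_1,\dots,\mathbb{A}_k)\bigr)$.
   Context: $\mathrm{Graff}(k,n)$ is the manifold of $k$-dimensional affine subspaces of $\mathbb{R}^n$, $\tau:\mathrm{Graff}(k,n)\to\mathrm{Gr}(k,n)$, $\mathbb{A}+c\mapsto\mathbb{A}$, and subsets carry the subspace topology. $\Omega(\mathbb{A}_1,\dots,\mathbb{A}_k)=\{\mathbb{B}\in\mathrm{Gr}(k,n):\dim(\mathbb{B}\cap\mathbb{A}_j)\ge j,\ j=1,\dots,k\}$; $\Psi(\mathbb{A}_1+b,\dots,\mathbb{A}_k+b)=\{\mathbb{B}+c\in\mathrm{Graff}(k,n):\dim((\mathbb{B}+c)\cap(\mathbb{A}_j+b))\ge j,\ j=1,\dots,k\}$; $s_b(\mathbb{B})=\mathbb{B}+b$. *)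

theory Defs
  imports "HOL-Analysis.Analysis"
begin

text \<open>Topology: induced by the embedding V \<mapsto> orthogonal projection onto V
  (as a map in the function space, product = pointwise topology, which on
  linear maps of a finite-dimensional space is the usual matrix topology).\<close>
definition Gr :: "nat \<Rightarrow> ('a::euclidean_space) set set" where
  "Gr k = {V. subspace V \<and> dim V = k}"

definition Gr_top :: "nat \<Rightarrow> ('a::euclidean_space) set topology" where
  "Gr_top k = pullback_topology (Gr k) closest_point euclidean"

text \<open>Topology: induced by S \<mapsto> affine orthogonal projection onto S (equivalently
  by the pair (projection onto the direction of S, displacement of S orthogonal
  to its direction)), i.e. the standard manifold topology.\<close>
definition Graff :: "nat \<Rightarrow> ('a::euclidean_space) set set" where
  "Graff k = {S. affine S \<and> S \<noteq> {} \<and> aff_dim S = int k}"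

definition Graff_top :: "nat \<Rightarrow> ('a::euclidean_space) set topology" where
  "Graff_top k = pullback_topology (Graff k) closest_point euclidean"

text \<open>tau : Graff(k,n) \<rightarrow> Gr(k,n), A + c \<mapsto> A (the direction of the affine subspace).\<close>
definition tau :: "('a::euclidean_space) set \<Rightarrow> 'a set" where
  "tau S = (\<lambda>x. x - (SOME a. a \<in> S)) ` S"

definition s_tr :: "('a::euclidean_space) \<Rightarrow> 'a set \<Rightarrow> 'a set" where
  "s_tr b B = (\<lambda>x. x + b) ` B"

definition Omega :: "nat \<Rightarrow> (nat \<Rightarrow> ('a::euclidean_space) set) \<Rightarrow> 'a set set" where
  "Omega k A = {B \<in> Gr k. \<forall>j\<in>{1..k}. dim (B \<inter> A j) \<ge> j}"

text \<open>Affine Schubert variety Psi(A_1+b,...,A_k+b) in Graff(k,n);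
  dimension of an affine set is aff_dim (the empty set has dimension -1).\<close>
definition Psi :: "nat \<Rightarrow> (nat \<Rightarrow> ('a::euclidean_space) set) \<Rightarrow> 'a \<Rightarrow> 'a set set" where
  "Psi k A b = {S \<in> Graff k. \<forall>j\<in>{1..k}. aff_dim (S \<inter> s_tr b (A j)) \<ge> int j}"

definition strong_deformation_retract_of_space :: "'a set \<Rightarrow> 'a topology \<Rightarrow> bool" where
  "strong_deformation_retract_of_space S X \<longleftrightarrow>
     S \<subseteq> topspace X \<and>
     (\<exists>r. homotopic_with (\<lambda>h. \<forall>x\<in>S. h x = x) X X id r \<and> r ` topspace X \<subseteq> S)"

end

theory Submission
  imports Defs
begin


lemma aff_dim_tr: "aff_dim ((\<lambda>x. x + v) ` S) = aff_dim (S::'a::euclidean_space set)"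
proof -
  have "(\<lambda>x. x + v) ` S = (+) v ` S" by (auto simp: add.commute)
  then show ?thesis by (simp only: aff_dim_translation_eq)
qed

lemma affine_tr: "affine S \<Longrightarrow> affine ((\<lambda>x. x + v) ` (S::'a::real_vector set))"
proof -
  have "(\<lambda>x. x + v) = (+) v" by (auto simp: add.commute)
  then show "affine S \<Longrightarrow> ?thesis" using affine_translation by metis
qed

lemma affine_closed: "affine (S::'a::euclidean_space set) \<Longrightarrow> closed S"
  by (metis affine_hull_eq closed_affine_hull)

lemma closest_point_tr:
  fixes S :: "'a::euclidean_space set"
  assumes "affine S" "S \<noteq> {}"
  shows "closest_point ((\<lambda>x. x + v) ` S) y = closest_point S (y - v) + v"
proof -
  have cl: "closed S" using assms affine_closed by blast
  have "(\<lambda>x. x + v) = (+) v" by (auto simp: add.commute)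
  then have cv: "convex ((\<lambda>x. x + v) ` S)" "closed ((\<lambda>x. x + v) ` S)"
    using convex_translation[OF affine_imp_convex[OF assms(1)]] closed_translation[OF cl] by metis+
  show ?thesis
  proof (rule closest_point_unique[symmetric, OF cv])
    show "closest_point S (y - v) + v \<in> (\<lambda>x. x + v) ` S"
      using closest_point_in_set[OF cl assms(2)] by blast
    show "\<forall>z\<in>(\<lambda>x. x + v) ` S. dist y (closest_point S (y - v) + v) \<le> dist y z"
    proof
      fix z assume "z \<in> (\<lambda>x. x + v) ` S"
      then obtain w where w: "w \<in> S" "z = w + v" by blast
      have "dist (y - v) (closest_point S (y - v)) \<le> dist (y - v) w"
        using closest_point_le[OF cl w(1)] .
      then show "dist y (closest_point S (y - v) + v) \<le> dist y z"
        using w by (simp add: dist_norm algebra_simps)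
    qed
  qed
qed

lemma tau_eq:
  fixes S :: "'a::euclidean_space set"
  assumes "affine S" "a \<in> S"
  shows "tau S = (\<lambda>x. x - a) ` S"
proof -
  define c where "c = (SOME a. a \<in> S)"
  have c: "c \<in> S" using assms(2) unfolding c_def by (metis someI_ex)
  have "(\<lambda>x. x - c) ` S = (\<lambda>x. x - a) ` S"
  proof (intro equalityI subsetI)
    fix y assume "y \<in> (\<lambda>x. x - c) ` S"
    then obtain x where x: "x \<in> S" "y = x - c" by blast
    have "x + 1 *\<^sub>R (a - c) \<in> S" using mem_affine_3_minus[OF assms(1) x(1) assms(2) c] .
    moreover have "y = (x + 1 *\<^sub>R (a - c)) - a" using x by simp
    ultimately show "y \<in> (\<lambda>x. x - a) ` S" by blast
  next
    fix y assume "y \<in> (\<lambda>x. x - a) ` S"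
    then obtain x where x: "x \<in> S" "y = x - a" by blast
    have "x + 1 *\<^sub>R (c - a) \<in> S" using mem_affine_3_minus[OF assms(1) x(1) c assms(2)] .
    moreover have "y = (x + 1 *\<^sub>R (c - a)) - c" using x by simp
    ultimately show "y \<in> (\<lambda>x. x - c) ` S" by blast
  qed
  then show ?thesis unfolding tau_def c_def by simp
qed

lemma tau_sub:
  fixes S :: "'a::euclidean_space set"
  assumes "affine S" "a \<in> S"
  shows "subspace (tau S)" "aff_dim S = int (dim (tau S))" "S = (\<lambda>x. x + a) ` tau S"
proof -
  have t: "tau S = (+) (-a) ` S" unfolding tau_eq[OF assms] by (rule image_cong) auto
  show s: "subspace (tau S)" unfolding t by (rule affine_diffs_subspace[OF assms])
  have "aff_dim S = aff_dim ((+) (-a) ` S)" by (rule aff_dim_translation_eq[symmetric])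
  also have "\<dots> = int (dim (tau S))" using aff_dim_subspace[OF s] t by simp
  finally show "aff_dim S = int (dim (tau S))" .
  have "(\<lambda>x. x + a) ` tau S = (\<lambda>x. -a + x + a) ` S" unfolding t image_image ..
  also have "\<dots> = id ` S" by (rule image_cong) auto
  finally show "S = (\<lambda>x. x + a) ` tau S" by simp
qed

lemma tau_tr:
  fixes S :: "'a::euclidean_space set"
  assumes "affine S" "a \<in> S"
  shows "tau ((\<lambda>x. x + v) ` S) = tau S"
proof -
  have "a + v \<in> (\<lambda>x. x + v) ` S" using assms by blast
  then have "tau ((\<lambda>x. x + v) ` S) = (\<lambda>x. x - (a + v)) ` ((\<lambda>x. x + v) ` S)"
    by (intro tau_eq affine_tr assms(1))
  also have "\<dots> = (\<lambda>x. x + v - (a + v)) ` S" unfolding image_image ..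
  also have "\<dots> = (\<lambda>x. x - a) ` S" by (rule image_cong) auto
  finally show ?thesis using tau_eq[OF assms] by simp
qed



lemma continuous_map_scaleR':
  fixes g :: "'x \<Rightarrow> 'b::real_normed_vector"
  shows "\<lbrakk>continuous_map X euclidean f; continuous_map X euclidean g\<rbrakk> \<Longrightarrow> continuous_map X euclidean (\<lambda>x. f x *\<^sub>R g x)"
  by (simp add: continuous_map_atin tendsto_scaleR)

lemma cp_joint:
  fixes \<sigma> :: "'x \<Rightarrow> 'a::euclidean_space set"
  assumes "\<And>z. z \<in> topspace Z \<Longrightarrow> affine (\<sigma> z) \<and> \<sigma> z \<noteq> {}"
    and "\<And>y. continuous_map Z euclidean (\<lambda>z. closest_point (\<sigma> z) y)"
    and "continuous_map Z euclidean p"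
  shows "continuous_map Z euclidean (\<lambda>z. closest_point (\<sigma> z) (p z))"
  unfolding continuous_map_atin limitin_canonical_iff
proof
  fix z0 assume z0: "z0 \<in> topspace Z"
  have A: "((\<lambda>z. closest_point (\<sigma> z) (p z0)) \<longlongrightarrow> closest_point (\<sigma> z0) (p z0)) (atin Z z0)"
    using assms(2)[of "p z0"] z0 unfolding continuous_map_atin limitin_canonical_iff by blast
  have P: "(p \<longlongrightarrow> p z0) (atin Z z0)"
    using assms(3) z0 unfolding continuous_map_atin limitin_canonical_iff by blast
  have D: "((\<lambda>z. dist (p z) (p z0)) \<longlongrightarrow> 0) (atin Z z0)"
    using tendsto_dist[OF P tendsto_const[of "p z0"]] by simp
  have E: "eventually (\<lambda>z. norm (closest_point (\<sigma> z) (p z) - closest_point (\<sigma> z) (p z0)) \<le> dist (p z) (p z0)) (atin Z z0)"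
    unfolding eventually_atin
  proof (rule disjI2, rule exI[of _ "topspace Z"], intro conjI ballI)
    fix z assume "z \<in> topspace Z - {z0}"
    then have a: "affine (\<sigma> z)" "\<sigma> z \<noteq> {}" using assms(1) by auto
    have "dist (closest_point (\<sigma> z) (p z)) (closest_point (\<sigma> z) (p z0)) \<le> dist (p z) (p z0)"
      by (rule closest_point_lipschitz[OF affine_imp_convex[OF a(1)] affine_closed[OF a(1)] a(2)])
    then show "norm (closest_point (\<sigma> z) (p z) - closest_point (\<sigma> z) (p z0)) \<le> dist (p z) (p z0)"
      by (simp add: dist_norm)
  qed (use z0 in auto)
  have "((\<lambda>z. closest_point (\<sigma> z) (p z) - closest_point (\<sigma> z) (p z0)) \<longlongrightarrow> 0) (atin Z z0)"
    using Lim_null_comparison[OF E D] .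
  from tendsto_add[OF this A]
  show "((\<lambda>z. closest_point (\<sigma> z) (p z)) \<longlongrightarrow> closest_point (\<sigma> z0) (p z0)) (atin Z z0)"
    by simp
qed

lemma cp_cont:
  fixes T :: "'a::euclidean_space set set"
  shows "continuous_map (prod_topology (top_of_set {0..1::real}) (subtopology (Graff_top k) T)) euclidean
           (\<lambda>z. closest_point (snd z) y)"
proof -
  have c1: "continuous_map (Graff_top k) euclidean (closest_point :: 'a set \<Rightarrow> 'a \<Rightarrow> 'a)"
    unfolding Graff_top_def using continuous_map_pullback[OF continuous_map_id, of "Graff k" closest_point] by simp
  have c2: "continuous_map euclidean euclidean (\<lambda>f::'a\<Rightarrow>'a. f y)"
    by (metis continuous_map_product_projection euclidean_product_topology iso_tuple_UNIV_I)
  have "continuous_map (Graff_top k) euclidean (\<lambda>S::'a set. closest_point S y)"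
    using continuous_map_compose[OF c1 c2] by (simp add: o_def)
  then have "continuous_map (subtopology (Graff_top k) T) euclidean (\<lambda>S::'a set. closest_point S y)"
    by (rule continuous_map_from_subtopology)
  from continuous_map_compose[OF continuous_map_snd this] show ?thesis by (simp add: o_def)
qed



definition Hd :: "'a::euclidean_space \<Rightarrow> real \<Rightarrow> 'a set \<Rightarrow> 'a set" where
  "Hd b t S = (\<lambda>x. x + t *\<^sub>R (b - closest_point S b)) ` S"

lemma Graff_D: "S \<in> Graff k \<Longrightarrow> affine S \<and> S \<noteq> {}"
  by (simp add: Graff_def)

lemma topspace_Graff_top: "topspace (Graff_top k) = Graff k"
  by (simp add: Graff_top_def topspace_pullback_topology)

lemma Hd_Graff: "S \<in> Graff k \<Longrightarrow> Hd b t S \<in> Graff k"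
  unfolding Hd_def Graff_def by (auto simp: affine_tr aff_dim_tr)

lemma deform:
  fixes T R :: "'a::euclidean_space set set"
  assumes T: "T \<subseteq> Graff k" "R \<subseteq> T"
    and pres: "\<And>S t. S \<in> T \<Longrightarrow> t \<in> {0..1} \<Longrightarrow> Hd b t S \<in> T"
    and one: "\<And>S. S \<in> T \<Longrightarrow> Hd b 1 S \<in> R"
    and fx: "\<And>S. S \<in> R \<Longrightarrow> closest_point S b = b"
  shows "strong_deformation_retract_of_space R (subtopology (Graff_top k) T)
      \<and> subtopology (Graff_top k) T homotopy_equivalent_space subtopology (Graff_top k) R"
proof -
  define X where "X = subtopology (Graff_top k) T"
  define Z where "Z = prod_topology (top_of_set {0..1::real}) X"
  define h where "h = (\<lambda>z::real \<times> 'a set. Hd b (fst z) (snd z))"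
  define r where "r = Hd b 1"
  have tX: "topspace X = T" unfolding X_def using T by (auto simp: topspace_Graff_top)
  have tZ: "topspace Z = {0..1} \<times> T" unfolding Z_def by (simp add: tX)
  have aff: "affine (snd z) \<and> snd z \<noteq> {}" if "z \<in> topspace Z" for z
  proof -
    have "snd z \<in> Graff k" using that T unfolding tZ by auto
    then show ?thesis by (rule Graff_D)
  qed
  have cpc: "continuous_map Z euclidean (\<lambda>z. closest_point (snd z) y)" for y
    unfolding Z_def X_def by (rule cp_cont)
  have fstc: "continuous_map Z euclidean (\<lambda>z. fst z)"
    unfolding Z_def by (rule continuous_map_into_fulltopology[OF continuous_map_fst])
  have "continuous_map Z euclidean (\<lambda>z. closest_point (h z) y)" for y
  proof (rule continuous_map_eq)
    let ?v = "\<lambda>z. fst z *\<^sub>R (b - closest_point (snd z) b)"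
    have vc: "continuous_map Z euclidean ?v"
      by (intro continuous_map_scaleR' fstc continuous_map_diff continuous_map_canonical_const cpc)
    show "continuous_map Z euclidean (\<lambda>z. closest_point (snd z) (y - ?v z) + ?v z)"
      by (intro continuous_map_add vc cp_joint[OF aff cpc] continuous_map_diff continuous_map_canonical_const)
    show "closest_point (snd z) (y - ?v z) + ?v z = closest_point (h z) y" if "z \<in> topspace Z" for z
    proof -
      have a: "affine (snd z)" "snd z \<noteq> {}" using aff[OF that] by auto
      show ?thesis unfolding h_def Hd_def closest_point_tr[OF a] ..
    qed
  qed
  then have "continuous_map Z (product_topology (\<lambda>_. euclidean) UNIV) (closest_point \<circ> h)"
    unfolding continuous_map_componentwise_UNIV by (simp add: o_def)
  then have cph: "continuous_map Z euclidean (closest_point \<circ> h)"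
    by (simp add: euclidean_product_topology)
  have hT: "h z \<in> T" if "z \<in> topspace Z" for z
    using that pres unfolding tZ h_def by auto
  have "topspace Z \<subseteq> h -` Graff k" using hT T by blast
  then have "continuous_map Z (Graff_top k) h"
    unfolding Graff_top_def by (rule continuous_map_pullback'[OF cph])
  then have hc: "continuous_map Z X h"
    unfolding X_def continuous_map_in_subtopology using hT by auto
  have H0: "Hd b 0 S = S" for S unfolding Hd_def by simp
  have HR: "Hd b t S = S" if "S \<in> R" for S t unfolding Hd_def using fx[OF that] by simp
  have hom: "homotopic_with (\<lambda>g. \<forall>x\<in>R. g x = x) X X id r"
    unfolding homotopic_with_def
  proof (intro exI[of _ h] conjI allI ballI)
    show "continuous_map (prod_topology (top_of_set {0..1}) X) X h" using hc unfolding Z_def .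
    show "h (0, x) = id x" for x unfolding h_def by (simp add: H0)
    show "h (1, x) = r x" for x unfolding h_def r_def by simp
    show "h (t, x) = x" if "x \<in> R" for t x unfolding h_def using HR[OF that] by simp
  qed
  have rR: "r ` topspace X \<subseteq> R" using one unfolding tX r_def by auto
  have sd: "strong_deformation_retract_of_space R X"
    unfolding strong_deformation_retract_of_space_def using hom rR tX T by auto
  have hom2: "homotopic_with (\<lambda>x. True) X X r id"
  proof -
    have "homotopic_with (\<lambda>x. True) X X id r" by (rule homotopic_with_mono[OF hom]) simp
    then show ?thesis by (rule homotopic_with_symD)
  qed
  have rc: "continuous_map X X r" using homotopic_with_imp_continuous_maps[OF hom] by blast
  have "retraction_maps X (subtopology X R) r id"
    unfolding retraction_maps_def
  proof (intro conjI ballI)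
    show "continuous_map X (subtopology X R) r"
      unfolding continuous_map_in_subtopology using rc rR by auto
    show "continuous_map (subtopology X R) X id"
      by (rule continuous_map_from_subtopology[OF continuous_map_id])
    show "r (id x) = x" if "x \<in> topspace (subtopology X R)" for x
      using that HR unfolding r_def by auto
  qed
  then have "X homotopy_equivalent_space subtopology X R"
    using deformation_retract_imp_homotopy_equivalent_space[OF hom2] by blast
  moreover have "subtopology X R = subtopology (Graff_top k) R"
    unfolding X_def subtopology_subtopology using T by (simp add: Int_absorb1)
  ultimately show ?thesis using sd X_def by simp
qed



lemma R_props:
  fixes A :: "nat \<Rightarrow> 'a::euclidean_space set"
  assumes "S \<in> s_tr b ` Omega k A"
  shows "S \<in> Graff k" "tau S = (THE B. B \<in> Omega k A \<and> S = s_tr b B)" "tau S \<in> Omega k A"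
    "closest_point S b = b"
proof -
  obtain B where B: "B \<in> Omega k A" "S = (\<lambda>x. x + b) ` B" using assms unfolding s_tr_def by blast
  have sB: "subspace B" "dim B = k" using B(1) unfolding Omega_def Gr_def by auto
  have bS: "b \<in> S" using B(2) subspace_0[OF sB(1)] by force
  have aS: "affine S" using B(2) affine_tr subspace_imp_affine[OF sB(1)] by blast
  have "B \<noteq> {}" using subspace_0[OF sB(1)] by blast
  then show "S \<in> Graff k" unfolding Graff_def using aS bS B(2) sB
    by (simp add: aff_dim_tr aff_dim_subspace)
  have "tau S = (\<lambda>x. x - b) ` S" by (rule tau_eq[OF aS bS])
  also have "\<dots> = B" unfolding B(2) image_image by simp
  finally have tS: "tau S = B" .
  show "tau S \<in> Omega k A" using tS B(1) by simp
  show "closest_point S b = b" using bS by (rule closest_point_self)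
  have "(THE B. B \<in> Omega k A \<and> S = s_tr b B) = B"
  proof (rule the_equality)
    show "B \<in> Omega k A \<and> S = s_tr b B" using B unfolding s_tr_def by simp
    fix B' assume "B' \<in> Omega k A \<and> S = s_tr b B'"
    then have "S = (\<lambda>x. x + b) ` B'" unfolding s_tr_def by simp
    then have "(\<lambda>x. x - b) ` S = B'" by (simp add: image_image)
    moreover have "(\<lambda>x. x - b) ` S = B" unfolding B(2) image_image by simp
    ultimately show "B' = B" by simp
  qed
  then show "tau S = (THE B. B \<in> Omega k A \<and> S = s_tr b B)" using tS by simp
qed

lemma H1_R:
  fixes A :: "nat \<Rightarrow> 'a::euclidean_space set"
  assumes "S \<in> Graff k" "tau S \<in> Omega k A"
  shows "Hd b 1 S \<in> s_tr b ` Omega k A"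
proof -
  have aS: "affine S" "S \<noteq> {}" using assms(1) Graff_D by auto
  define c where "c = closest_point S b"
  have cS: "c \<in> S" unfolding c_def by (rule closest_point_in_set[OF affine_closed[OF aS(1)] aS(2)])
  have S1: "Hd b 1 S = (\<lambda>x. x + (b - c)) ` S" unfolding Hd_def c_def by simp
  have t1: "tau (Hd b 1 S) = tau S" unfolding S1 by (rule tau_tr[OF aS(1) cS])
  have bS1: "b \<in> Hd b 1 S" unfolding S1 using cS by force
  have "Hd b 1 S = (\<lambda>x. x + b) ` tau (Hd b 1 S)"
    by (rule tau_sub(3)[OF _ bS1]) (simp add: S1 affine_tr aS)
  then have "Hd b 1 S = s_tr b (tau S)" unfolding s_tr_def t1 .
  then show ?thesis using assms(2) by blast
qed

lemma T2_pres:
  fixes A :: "nat \<Rightarrow> 'a::euclidean_space set"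
  assumes "S \<in> Graff k" "tau S \<in> Omega k A"
  shows "Hd b t S \<in> Graff k \<and> tau (Hd b t S) \<in> Omega k A"
proof -
  have aS: "affine S" "S \<noteq> {}" using assms(1) Graff_D by auto
  then obtain a where "a \<in> S" by blast
  then have "tau (Hd b t S) = tau S" unfolding Hd_def by (rule tau_tr[OF aS(1)])
  then show ?thesis using assms Hd_Graff by simp
qed

lemma aff_dim_ne: "aff_dim (X::'a::euclidean_space set) \<ge> int j \<Longrightarrow> X \<noteq> {}"
  by auto

lemma Psi_tau:
  fixes A :: "nat \<Rightarrow> 'a::euclidean_space set"
  assumes sub: "\<forall>j\<in>{1..k}. subspace (A j)" and S: "S \<in> Psi k A b"
  shows "tau S \<in> Omega k A"
proof -
  have G: "S \<in> Graff k" and D: "\<forall>j\<in>{1..k}. aff_dim (S \<inter> s_tr b (A j)) \<ge> int j"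
    using S unfolding Psi_def by auto
  have aS: "affine S" "S \<noteq> {}" using G Graff_D by auto
  then obtain a where a: "a \<in> S" by blast
  have st: "subspace (tau S)" by (rule tau_sub(1)[OF aS(1) a])
  have "int (dim (tau S)) = aff_dim S" using tau_sub(2)[OF aS(1) a] by simp
  also have "\<dots> = int k" using G unfolding Graff_def by simp
  finally have dt: "dim (tau S) = k" by simp
  have "dim (tau S \<inter> A j) \<ge> j" if j: "j \<in> {1..k}" for j
  proof -
    have dj: "int j \<le> aff_dim (S \<inter> s_tr b (A j))" using D j by blast
    have ne: "S \<inter> s_tr b (A j) \<noteq> {}"
    proof
      assume "S \<inter> s_tr b (A j) = {}"
      then have "aff_dim (S \<inter> s_tr b (A j)) = -1" using aff_dim_empty by blast
      then show False using dj by simp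
    qed
    then obtain p where p: "p \<in> S" "p \<in> s_tr b (A j)" by blast
    obtain a' where a': "a' \<in> A j" "p = a' + b" using p(2) unfolding s_tr_def by blast
    have sj: "subspace (A j)" using sub j by blast
    have tS: "tau S = (\<lambda>x. x - p) ` S" by (rule tau_eq[OF aS(1) p(1)])
    have "(\<lambda>x. x + (-p)) ` (S \<inter> s_tr b (A j)) \<subseteq> tau S \<inter> A j"
    proof
      fix y assume "y \<in> (\<lambda>x. x + (-p)) ` (S \<inter> s_tr b (A j))"
      then obtain x a'' where x: "x \<in> S" "a'' \<in> A j" "x = a'' + b" "y = x - p"
        unfolding s_tr_def by auto
      have "y = a'' - a'" using x a' by simp
      then have "y \<in> A j" using subspace_diff[OF sj x(2) a'(1)] by simp
      moreover have "y \<in> tau S" using tS x by blast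
      ultimately show "y \<in> tau S \<inter> A j" by blast
    qed
    then have "aff_dim ((\<lambda>x. x + (-p)) ` (S \<inter> s_tr b (A j))) \<le> aff_dim (tau S \<inter> A j)"
      by (rule aff_dim_subset)
    moreover have "aff_dim (tau S \<inter> A j) = int (dim (tau S \<inter> A j))"
      by (rule aff_dim_subspace[OF subspace_inter[OF st sj]])
    ultimately show ?thesis using D j unfolding aff_dim_tr by force
  qed
  then show ?thesis unfolding Omega_def Gr_def using st dt by auto
qed

lemma Psi_pres:
  fixes A :: "nat \<Rightarrow> 'a::euclidean_space set"
  assumes sub: "\<forall>j\<in>{1..k}. subspace (A j)" and S: "S \<in> Psi k A b"
  shows "Hd b t S \<in> Psi k A b"
proof -
  have G: "S \<in> Graff k" and D: "\<forall>j\<in>{1..k}. aff_dim (S \<inter> s_tr b (A j)) \<ge> int j"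
    using S unfolding Psi_def by auto
  have aS: "affine S" "S \<noteq> {}" using G Graff_D by auto
  define q where "q = closest_point S b"
  have qS: "q \<in> S" unfolding q_def by (rule closest_point_in_set[OF affine_closed[OF aS(1)] aS(2)])
  have "aff_dim (Hd b t S \<inter> s_tr b (A j)) \<ge> int j" if j: "j \<in> {1..k}" for j
  proof -
    have dj: "int j \<le> aff_dim (S \<inter> s_tr b (A j))" using D j by blast
    have ne: "S \<inter> s_tr b (A j) \<noteq> {}"
    proof
      assume "S \<inter> s_tr b (A j) = {}"
      then have "aff_dim (S \<inter> s_tr b (A j)) = -1" using aff_dim_empty by blast
      then show False using dj by simp
    qed
    then obtain p where p: "p \<in> S" "p \<in> s_tr b (A j)" by blast
    obtain a' where a': "a' \<in> A j" "p = a' + b" using p(2) unfolding s_tr_def by blast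
    have sj: "subspace (A j)" using sub j by blast
    have "(\<lambda>x. x + t *\<^sub>R (b - p)) ` (S \<inter> s_tr b (A j)) \<subseteq> Hd b t S \<inter> s_tr b (A j)"
    proof
      fix y assume "y \<in> (\<lambda>x. x + t *\<^sub>R (b - p)) ` (S \<inter> s_tr b (A j))"
      then obtain x a'' where x: "x \<in> S" "a'' \<in> A j" "x = a'' + b" "y = x + t *\<^sub>R (b - p)"
        unfolding s_tr_def by auto
      have m: "x + t *\<^sub>R (q - p) \<in> S" by (rule mem_affine_3_minus[OF aS(1) x(1) qS p(1)])
      have "y = (x + t *\<^sub>R (q - p)) + t *\<^sub>R (b - q)" using x(4) by (simp add: algebra_simps)
      then have "y \<in> Hd b t S" unfolding Hd_def q_def[symmetric] using m by blast
      moreover have "y = (a'' - t *\<^sub>R a') + b" using x a' by (simp add: algebra_simps)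
      moreover have "a'' - t *\<^sub>R a' \<in> A j"
        by (rule subspace_diff[OF sj x(2) subspace_scale[OF sj a'(1)]])
      ultimately show "y \<in> Hd b t S \<inter> s_tr b (A j)" unfolding s_tr_def by blast
    qed
    then have "aff_dim ((\<lambda>x. x + t *\<^sub>R (b - p)) ` (S \<inter> s_tr b (A j))) \<le> aff_dim (Hd b t S \<inter> s_tr b (A j))"
      by (rule aff_dim_subset)
    then show ?thesis using D j unfolding aff_dim_tr by force
  qed
  then show ?thesis unfolding Psi_def using Hd_Graff[OF G] by auto
qed

lemma R_Psi:
  fixes A :: "nat \<Rightarrow> 'a::euclidean_space set"
  assumes sub: "\<forall>j\<in>{1..k}. subspace (A j)" and S: "S \<in> s_tr b ` Omega k A"
  shows "S \<in> Psi k A b"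
proof -
  obtain B where B: "B \<in> Omega k A" "S = (\<lambda>x. x + b) ` B" using S unfolding s_tr_def by blast
  have sB: "subspace B" and dB: "\<forall>j\<in>{1..k}. dim (B \<inter> A j) \<ge> j"
    using B(1) unfolding Omega_def Gr_def by auto
  have "aff_dim (S \<inter> s_tr b (A j)) \<ge> int j" if j: "j \<in> {1..k}" for j
  proof -
    have sj: "subspace (A j)" using sub j by blast
    have inj: "inj (\<lambda>x::'a. x + b)" by (simp add: inj_def)
    have "S \<inter> s_tr b (A j) = (\<lambda>x. x + b) ` (B \<inter> A j)"
      unfolding B(2) s_tr_def image_Int[OF inj] ..
    then have "aff_dim (S \<inter> s_tr b (A j)) = int (dim (B \<inter> A j))"
      using aff_dim_subspace[OF subspace_inter[OF sB sj]] by (simp add: aff_dim_tr)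
    then show ?thesis using dB j by simp
  qed
  then show ?thesis unfolding Psi_def using R_props(1)[OF S] by auto
qed


theorem theorem7p6:
  fixes k :: nat and A :: "nat \<Rightarrow> (real ^ 'n) set" and b :: "real ^ 'n"
  assumes "\<forall>j\<in>{1..k}. subspace (A j)"
    and "\<forall>j. 1 \<le> j \<and> j < k \<longrightarrow> A j \<subseteq> A (Suc j)"
  shows "strong_deformation_retract_of_space (s_tr b ` Omega k A)
           (subtopology (Graff_top k) (Psi k A b))
       \<and> (subtopology (Graff_top k) (Psi k A b)) homotopy_equivalent_space
           (subtopology (Graff_top k) {S \<in> Graff k. tau S \<in> Omega k A})"
proof -
  let ?R = "s_tr b ` Omega k A"
  let ?T2 = "{S \<in> Graff k. tau S \<in> Omega k A}"
  have P: "strong_deformation_retract_of_space ?R (subtopology (Graff_top k) (Psi k A b))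
      \<and> subtopology (Graff_top k) (Psi k A b) homotopy_equivalent_space subtopology (Graff_top k) ?R"
  proof (rule deform)
    show "Psi k A b \<subseteq> Graff k" unfolding Psi_def by auto
    show "?R \<subseteq> Psi k A b" using R_Psi[OF assms(1)] by blast
    show "Hd b t S \<in> Psi k A b" if "S \<in> Psi k A b" for S t using Psi_pres[OF assms(1) that] .
    show "Hd b 1 S \<in> ?R" if "S \<in> Psi k A b" for S
      using H1_R[OF _ Psi_tau[OF assms(1) that]] that unfolding Psi_def by blast
    show "closest_point S b = b" if "S \<in> ?R" for S using R_props(4)[OF that] .
  qed
  have Q: "strong_deformation_retract_of_space ?R (subtopology (Graff_top k) ?T2)
      \<and> subtopology (Graff_top k) ?T2 homotopy_equivalent_space subtopology (Graff_top k) ?R"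
  proof (rule deform)
    show "?T2 \<subseteq> Graff k" by auto
    show "?R \<subseteq> ?T2" using R_props(1,3) by blast
    show "Hd b t S \<in> ?T2" if "S \<in> ?T2" for S t using T2_pres that by blast
    show "Hd b 1 S \<in> ?R" if "S \<in> ?T2" for S using H1_R that by blast
    show "closest_point S b = b" if "S \<in> ?R" for S using R_props(4)[OF that] .
  qed
  have "subtopology (Graff_top k) (Psi k A b) homotopy_equivalent_space subtopology (Graff_top k) ?T2"
    using homotopy_eqv_trans[OF conjunct2[OF P] iffD1[OF homotopy_equivalent_space_sym conjunct2[OF Q]]] .
  then show ?thesis using P by blast
qed

end
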